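(* Let $\lambda>0$, let $\boldsymbol\alpha^\star$ be the optimal solution of the dual problem $\max_{\boldsymbol\alpha\ge\mathbf0}D_\lambda(\boldsymbol\alpha)$ and $\mathbf m^\star$ the optimal solution of the primal problem $\min_{\mathbf m\ge\mathbf0}P_\lambda(\mathbf m)$. Suppose $\mathbf q\in\mathbb R^{2nK}_{\ge0}$ and $r\ge0$ satisfy $\|\boldsymbol\alpha^\star-\mathbf q\|_2^2\le r^2$. For $k\in[p]$ let $$\mathrm{Prune}(k\mid\mathbf q,r)=\sum_{i\in[n]}\sum_{l\in\mathcal D_i}q_{il}\max\{x_{i,k},x_{l,k}\}^2+r\sqrt{\sum_{i\in[n]}\Big[\sum_{l\in\mathcal D_i}\max\{x_{i,k},x_{l,k}\}^4+\sum_{j\in\mathcal S_i}\max\{x_{i,k},x_{j,k}\}^4\Big]}.$$ If $\mathrm{Prune}(k\mid\mathbf q,r)\le\lambda$, then $m^\star_{k'}=0$ for every descendant $k'\supseteq k$.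
   Context: Let $n,K,p\ge1$ be integers, $[n]=\{1,\dots,n\}$. For each $i\in[n]$ let $\mathbf x_i=(x_{i,1},\dots,x_{i,p})^\top\in\mathbb R^p$ have nonnegative entries and let $\mathcal D_i,\mathcal S_i\subseteq[n]$ be sets of size $K$. Put $\mathbf c_{ij}=(\mathbf x_i-\mathbf x_j)\circ(\mathbf x_i-\mathbf x_j)$ (entrywise product). Vectors in $\mathbb R^{2nK}$ are indexed by the pairs $(i,l)$, $l\in\mathcal D_i$ ("different-class pairs") and $(i,j)$, $j\in\mathcal S_i$ ("same-class pairs"); $\mathbf q$ has entries $q_{il},q_{ij}$. $\mathbf C\in\mathbb R^{p\times2nK}$ has column $\mathbf c_{il}$ for each different-class pair and $-\mathbf c_{ij}$ for each same-class pair. Fix $L\ge U\ge0$, $\eta>0$; let $\mathbf t\in\mathbb R^{2nK}$ have entry $L$ at different-class pairs and $-U$ at same-class pairs; $\ell_s(x)=([s-x]_+)^2$ with $[z]_+=\max\{z,0\}$ (entrywise for vectors); $\mathbf1$ is the all-ones vector. For $\lambda>0$, $$P_\lambda(\mathbf m)=\sum_{i\in[n]}\Big[\sum_{l\in\mathcal D_i}\ell_L(\mathbf m^\top\mathbf c_{il})+\sum_{j\in\mathcal S_i}\ell_{-U}(-\mathbf m^\top\mathbf c_{ij})\Big]+\lambda\Big(\mathbf m^\top\mathbf1+\frac\eta2\|\mathbf m\|_2^2\Big)\ (\mathbf m\in\mathbb R^p_{\ge0}),$$ $$D_\lambda(\boldsymbol\alpha)=-\frac14\|\boldsymbol\alpha\|_2^2+\mathbf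 t^\top\boldsymbol\alpha-\frac{\lambda\eta}2\Big\|\frac1{\lambda\eta}[\mathbf C\boldsymbol\alpha-\lambda\mathbf1]_+\Big\|_2^2\ (\boldsymbol\alpha\in\mathbb R^{2nK}_{\ge0}).$$ The feature indices $[p]$ are nodes of a rooted graph-mining tree: $x_{i,k}=g(\#(H_k\sqsubseteq G_i))$, where $H_k$ is the subgraph at node $k$, $G_i$ the $i$-th input graph, $\#(H\sqsubseteq G)$ the number of non-overlapping occurrences of $H$ in $G$, $g$ nonnegative and nondecreasing, and each node's subgraph is contained in its children's subgraphs. Write $k'\supseteq k$ if $k'$ is a descendant of $k$; in particular $0\le x_{i,k'}\le x_{i,k}$ for all $i$ whenever $k'\supseteq k$. *)

theory Defs
  imports Complex_Main
begin

text \<open>Index conventions: samples i range over {1..n}, features k over {1..p}.  Different-class neighbours Dc i, same-class neighbours Sc i.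
  Dual vectors are functions on tagged pairs: (True,i,l) for l in Dc i (different-class pair),
  (False,i,j) for j in Sc i (same-class pair).\<close>

definition cvec :: "(nat \<Rightarrow> nat \<Rightarrow> real) \<Rightarrow> nat \<Rightarrow> nat \<Rightarrow> nat \<Rightarrow> real" where
  "cvec x i j k = (x i k - x j k) * (x i k - x j k)"

definition sqhinge :: "real \<Rightarrow> real \<Rightarrow> real" where
  "sqhinge s z = (max (s - z) 0)\<^sup>2"

definition pairidx :: "nat \<Rightarrow> (nat \<Rightarrow> nat set) \<Rightarrow> (nat \<Rightarrow> nat set) \<Rightarrow> (bool \<times> nat \<times> nat) set" where
  "pairidx n Dc Sc = {(True, i, l) | i l. i \<in> {1..n} \<and> l \<in> Dc i}
                   \<union> {(False, i, j) | i j. i \<in> {1..n} \<and> j \<in> Sc i}"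

definition mdot :: "nat \<Rightarrow> (nat \<Rightarrow> nat \<Rightarrow> real) \<Rightarrow> (nat \<Rightarrow> real) \<Rightarrow> nat \<Rightarrow> nat \<Rightarrow> real" where
  "mdot p x m i j = (\<Sum>k\<in>{1..p}. m k * cvec x i j k)"

definition primal :: "nat \<Rightarrow> nat \<Rightarrow> (nat \<Rightarrow> nat \<Rightarrow> real) \<Rightarrow> (nat \<Rightarrow> nat set) \<Rightarrow> (nat \<Rightarrow> nat set)
    \<Rightarrow> real \<Rightarrow> real \<Rightarrow> real \<Rightarrow> real \<Rightarrow> (nat \<Rightarrow> real) \<Rightarrow> real" where
  "primal n p x Dc Sc L U \<eta> lam m =
     (\<Sum>i\<in>{1..n}. (\<Sum>l\<in>Dc i. sqhinge L (mdot p x m i l))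
                  + (\<Sum>j\<in>Sc i. sqhinge (- U) (- mdot p x m i j)))
     + lam * ((\<Sum>k\<in>{1..p}. m k) + \<eta> / 2 * (\<Sum>k\<in>{1..p}. (m k)\<^sup>2))"

definition Calpha :: "nat \<Rightarrow> (nat \<Rightarrow> nat \<Rightarrow> real) \<Rightarrow> (nat \<Rightarrow> nat set) \<Rightarrow> (nat \<Rightarrow> nat set)
    \<Rightarrow> (bool \<times> nat \<times> nat \<Rightarrow> real) \<Rightarrow> nat \<Rightarrow> real" where
  "Calpha n x Dc Sc \<alpha> k =
     (\<Sum>i\<in>{1..n}. (\<Sum>l\<in>Dc i. \<alpha> (True, i, l) * cvec x i l k)
                  - (\<Sum>j\<in>Sc i. \<alpha> (False, i, j) * cvec x i j k))"

definition tvec :: "real \<Rightarrow> real \<Rightarrow> bool \<times> nat \<times> nat \<Rightarrow> real" where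
  "tvec L U a = (if fst a then L else - U)"

definition dual :: "nat \<Rightarrow> nat \<Rightarrow> (nat \<Rightarrow> nat \<Rightarrow> real) \<Rightarrow> (nat \<Rightarrow> nat set) \<Rightarrow> (nat \<Rightarrow> nat set)
    \<Rightarrow> real \<Rightarrow> real \<Rightarrow> real \<Rightarrow> real \<Rightarrow> (bool \<times> nat \<times> nat \<Rightarrow> real) \<Rightarrow> real" where
  "dual n p x Dc Sc L U \<eta> lam \<alpha> =
     - 1/4 * (\<Sum>a\<in>pairidx n Dc Sc. (\<alpha> a)\<^sup>2)
     + (\<Sum>a\<in>pairidx n Dc Sc. tvec L U a * \<alpha> a)
     - lam * \<eta> / 2 * (\<Sum>k\<in>{1..p}. (1 / (lam * \<eta>) * max (Calpha n x Dc Sc \<alpha> k - lam) 0)\<^sup>2)"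

definition prune :: "nat \<Rightarrow> (nat \<Rightarrow> nat \<Rightarrow> real) \<Rightarrow> (nat \<Rightarrow> nat set) \<Rightarrow> (nat \<Rightarrow> nat set)
    \<Rightarrow> (bool \<times> nat \<times> nat \<Rightarrow> real) \<Rightarrow> real \<Rightarrow> nat \<Rightarrow> real" where
  "prune n x Dc Sc q r k =
     (\<Sum>i\<in>{1..n}. \<Sum>l\<in>Dc i. q (True, i, l) * (max (x i k) (x l k))\<^sup>2)
     + r * sqrt (\<Sum>i\<in>{1..n}. (\<Sum>l\<in>Dc i. (max (x i k) (x l k)) ^ 4)
                             + (\<Sum>j\<in>Sc i. (max (x i k) (x j k)) ^ 4))"

end

theory Submission imports Defs "HOL-Analysis.Convex" begin

definition pos :: "real \<Rightarrow> real" where "pos u = max u 0"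

definition Pabs :: "'a set \<Rightarrow> nat set \<Rightarrow> ('a \<Rightarrow> real) \<Rightarrow> ('a \<Rightarrow> real) \<Rightarrow> ('a \<Rightarrow> nat \<Rightarrow> real) \<Rightarrow> real \<Rightarrow> real \<Rightarrow> (nat \<Rightarrow> real) \<Rightarrow> real" where
 "Pabs A F s sg c lam \<eta> m =
    (\<Sum>a\<in>A. (pos (s a - sg a * (\<Sum>k\<in>F. m k * c a k)))\<^sup>2)
    + lam * ((\<Sum>k\<in>F. m k) + \<eta> / 2 * (\<Sum>k\<in>F. (m k)\<^sup>2))"

definition Cabs :: "'a set \<Rightarrow> ('a \<Rightarrow> real) \<Rightarrow> ('a \<Rightarrow> nat \<Rightarrow> real) \<Rightarrow> ('a \<Rightarrow> real) \<Rightarrow> nat \<Rightarrow> real" where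
 "Cabs A sg c \<alpha> k = (\<Sum>a\<in>A. sg a * \<alpha> a * c a k)"

definition Dabs :: "'a set \<Rightarrow> nat set \<Rightarrow> ('a \<Rightarrow> real) \<Rightarrow> ('a \<Rightarrow> real) \<Rightarrow> ('a \<Rightarrow> nat \<Rightarrow> real) \<Rightarrow> real \<Rightarrow> real \<Rightarrow> ('a \<Rightarrow> real) \<Rightarrow> real" where
 "Dabs A F s sg c lam \<eta> \<alpha> =
    - 1/4 * (\<Sum>a\<in>A. (\<alpha> a)\<^sup>2) + (\<Sum>a\<in>A. s a * \<alpha> a)
    - (\<Sum>k\<in>F. (pos (Cabs A sg c \<alpha> k - lam))\<^sup>2 / (2 * lam * \<eta>))"

definition lossgap :: "real \<Rightarrow> real \<Rightarrow> real" where
 "lossgap u al = (pos u)\<^sup>2 - al * u + al\<^sup>2 / 4"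

definition featgap :: "real \<Rightarrow> real \<Rightarrow> real \<Rightarrow> real \<Rightarrow> real" where
 "featgap lam \<eta> m C = lam * m + lam * \<eta> / 2 * m\<^sup>2 - m * C + (pos (C - lam))\<^sup>2 / (2 * lam * \<eta>)"

lemma lossgap_nonneg: "al \<ge> 0 \<Longrightarrow> lossgap u al \<ge> 0"
  unfolding lossgap_def pos_def
proof -
  assume "al \<ge> 0"
  have "al * u \<le> al * max u 0" using \<open>al \<ge> 0\<close> by (simp add: mult_left_mono)
  moreover have "0 \<le> (max u 0 - al/2)\<^sup>2" by simp
  ultimately show "0 \<le> (max u 0)\<^sup>2 - al * u + al\<^sup>2 / 4"
    by (simp add: power2_eq_square algebra_simps)
qed

lemma featgap_nonneg:
  assumes "lam > 0" "\<eta> > 0" "m \<ge> 0"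
  shows "featgap lam \<eta> m C \<ge> 0"
proof (cases "C - lam \<le> 0")
  case True
  then have "lam * m - m * C \<ge> 0" using assms(3)
    by (metis diff_ge_0_iff_ge mult.commute mult_nonneg_nonneg neg_le_0_iff_le right_diff_distrib' minus_diff_eq)
  moreover have "lam * \<eta> / 2 * m\<^sup>2 \<ge> 0" "(pos (C - lam))\<^sup>2 / (2 * lam * \<eta>) \<ge> 0" using assms by auto
  ultimately show ?thesis unfolding featgap_def by linarith
next
  case False
  have e: "featgap lam \<eta> m C = (lam * \<eta> * m - (C - lam))\<^sup>2 / (2 * lam * \<eta>)"
    using False assms unfolding featgap_def pos_def
    by (simp add: field_simps power2_eq_square)
  show ?thesis unfolding e using assms by simp
qed

lemma featgap_zero:
  assumes "lam > 0" "\<eta> > 0" "m \<ge> 0" "featgap lam \<eta> m C = 0"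
  shows "m = pos (C - lam) / (lam * \<eta>)"
proof (cases "C - lam \<le> 0")
  case True
  have "lam * m - m * C \<ge> 0" using True assms(3)
    by (metis diff_ge_0_iff_ge mult.commute mult_nonneg_nonneg neg_le_0_iff_le right_diff_distrib' minus_diff_eq)
  moreover have "featgap lam \<eta> m C = (lam * m - m * C) + lam * \<eta> / 2 * m\<^sup>2"
    using True unfolding featgap_def pos_def by simp
  ultimately have "lam * \<eta> / 2 * m\<^sup>2 = 0" using assms
    by (smt (verit) mult_pos_pos zero_le_power2 mult_nonneg_nonneg half_gt_zero)
  then have "m = 0" using assms by simp
  then show ?thesis using True by (simp add: pos_def)
next
  case False
  have e: "featgap lam \<eta> m C = (lam * \<eta> * m - (C - lam))\<^sup>2 / (2 * lam * \<eta>)"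
    using False assms unfolding featgap_def pos_def
    by (simp add: field_simps power2_eq_square)
  then have "lam * \<eta> * m = C - lam" using assms by simp
  then show ?thesis using False assms by (simp add: pos_def field_simps)
qed

lemma swap_key:
  "(\<Sum>a\<in>A. \<alpha> a * (sg a * (\<Sum>k\<in>F. m k * c a k))) = (\<Sum>k\<in>F. m k * Cabs A sg c \<alpha> k)"
proof -
  have "(\<Sum>a\<in>A. \<alpha> a * (sg a * (\<Sum>k\<in>F. m k * c a k))) = (\<Sum>a\<in>A. \<Sum>k\<in>F. m k * (sg a * \<alpha> a * c a k))"
  proof (rule sum.cong[OF refl])
    fix a
    have "(\<Sum>k\<in>F. m k * (sg a * \<alpha> a * c a k)) = (\<Sum>k\<in>F. (sg a * \<alpha> a) * (m k * c a k))"
      by (intro sum.cong refl) (simp only: mult_ac)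
    also have "\<dots> = (sg a * \<alpha> a) * (\<Sum>k\<in>F. m k * c a k)" by (rule sum_distrib_left[symmetric])
    finally show "\<alpha> a * (sg a * (\<Sum>k\<in>F. m k * c a k)) = (\<Sum>k\<in>F. m k * (sg a * \<alpha> a * c a k))"
      by (simp add: mult_ac)
  qed
  also have "\<dots> = (\<Sum>k\<in>F. \<Sum>a\<in>A. m k * (sg a * \<alpha> a * c a k))" by (rule sum.swap)
  also have "\<dots> = (\<Sum>k\<in>F. m k * Cabs A sg c \<alpha> k)" unfolding Cabs_def by (simp add: sum_distrib_left)
  finally show ?thesis .
qed

lemma gap_identity:
  shows "Pabs A F s sg c lam \<eta> m - Dabs A F s sg c lam \<eta> \<alpha> =
    (\<Sum>a\<in>A. lossgap (s a - sg a * (\<Sum>k\<in>F. m k * c a k)) (\<alpha> a))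
    + (\<Sum>k\<in>F. featgap lam \<eta> (m k) (Cabs A sg c \<alpha> k))"
proof -
  let ?z = "\<lambda>a. (\<Sum>k\<in>F. m k * c a k)"
  have 1: "(\<Sum>a\<in>A. lossgap (s a - sg a * ?z a) (\<alpha> a)) =
     (\<Sum>a\<in>A. (pos (s a - sg a * ?z a))\<^sup>2) - (\<Sum>a\<in>A. s a * \<alpha> a)
     + (\<Sum>a\<in>A. \<alpha> a * (sg a * ?z a)) + 1/4 * (\<Sum>a\<in>A. (\<alpha> a)\<^sup>2)"
    unfolding lossgap_def
    by (simp add: sum.distrib sum_subtractf sum_distrib_left algebra_simps sum_divide_distrib)
  have 2: "(\<Sum>k\<in>F. featgap lam \<eta> (m k) (Cabs A sg c \<alpha> k)) =
      lam * (\<Sum>k\<in>F. m k) + lam * \<eta> / 2 * (\<Sum>k\<in>F. (m k)\<^sup>2) - (\<Sum>k\<in>F. m k * Cabs A sg c \<alpha> k)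
      + (\<Sum>k\<in>F. (pos (Cabs A sg c \<alpha> k - lam))\<^sup>2 / (2 * lam * \<eta>))"
    unfolding featgap_def
    by (simp add: sum.distrib sum_subtractf sum_distrib_left)
  show ?thesis unfolding Pabs_def Dabs_def 1 2 swap_key by (simp add: algebra_simps)
qed

lemma pos_sq_step: "(pos (u + h))\<^sup>2 \<le> (pos u)\<^sup>2 + 2 * pos u * h + h\<^sup>2"
proof -
  have "(max (u + h) 0)\<^sup>2 \<le> (max u 0)\<^sup>2 + 2 * max u 0 * h + h\<^sup>2"
  proof (cases "u \<ge> 0")
    case True
    have "0 \<le> (u + h)\<^sup>2" by simp
    then show ?thesis using True by (cases "u + h \<ge> 0") (auto simp: power2_eq_square algebra_simps)
  next
    case False
    then show ?thesis
    proof (cases "u + h \<ge> 0")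
      case True
      have "u * (u + 2 * h) \<le> 0" using True False by (intro mult_nonpos_nonneg) auto
      then show ?thesis using True False by (simp add: power2_eq_square algebra_simps)
    qed simp
  qed
  then show ?thesis unfolding pos_def .
qed

lemma upd_sum:
  fixes G :: "nat \<Rightarrow> real \<Rightarrow> real"
  assumes "finite F" "k0 \<in> F"
  shows "(\<Sum>k\<in>F. G k ((m(k0:=v)) k)) = (\<Sum>k\<in>F. G k (m k)) + G k0 v - G k0 (m k0)"
proof -
  have "(\<Sum>k\<in>F. G k ((m(k0:=v)) k)) = G k0 v + (\<Sum>k\<in>F-{k0}. G k ((m(k0:=v)) k))"
    using assms by (simp add: sum.remove)
  also have "(\<Sum>k\<in>F-{k0}. G k ((m(k0:=v)) k)) = (\<Sum>k\<in>F-{k0}. G k (m k))"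
    by (intro sum.cong) auto
  also have "\<dots> = (\<Sum>k\<in>F. G k (m k)) - G k0 (m k0)"
    using assms by (simp add: sum.remove)
  finally show ?thesis by simp
qed

definition ahat where
 "ahat F s sg c m a = 2 * pos (s a - sg a * (\<Sum>k\<in>F. m k * c a k))"

lemma Pabs_step:
  assumes "finite A" "finite F" "k0 \<in> F" "\<forall>a\<in>A. sg a = 1 \<or> sg a = -1"
  shows "Pabs A F s sg c lam \<eta> (m(k0 := m k0 + t)) \<le> Pabs A F s sg c lam \<eta> m
     - t * (Cabs A sg c (ahat F s sg c m) k0 - lam - lam * \<eta> * m k0)
     + t\<^sup>2 * ((\<Sum>a\<in>A. (c a k0)\<^sup>2) + lam * \<eta> / 2)"
proof -
  let ?z = "\<lambda>a. (\<Sum>k\<in>F. m k * c a k)"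
  have z: "(\<Sum>k\<in>F. (m(k0 := m k0 + t)) k * c a k) = ?z a + t * c a k0" for a
    using upd_sum[OF assms(2,3), of "\<lambda>k y. y * c a k" m "m k0 + t"] by (simp add: algebra_simps)
  have loss: "(pos (s a - sg a * (\<Sum>k\<in>F. (m(k0 := m k0 + t)) k * c a k)))\<^sup>2 \<le>
      (pos (s a - sg a * ?z a))\<^sup>2 - t * (sg a * ahat F s sg c m a * c a k0) + t\<^sup>2 * (c a k0)\<^sup>2"
    if "a \<in> A" for a
  proof -
    have sg2: "(sg a)\<^sup>2 = 1" using assms(4) that by auto
    have "s a - sg a * (\<Sum>k\<in>F. (m(k0 := m k0 + t)) k * c a k) = (s a - sg a * ?z a) + (- sg a * t * c a k0)"
      unfolding z by (simp add: algebra_simps)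
    then have "(pos (s a - sg a * (\<Sum>k\<in>F. (m(k0 := m k0 + t)) k * c a k)))\<^sup>2 \<le>
        (pos (s a - sg a * ?z a))\<^sup>2 + 2 * pos (s a - sg a * ?z a) * (- sg a * t * c a k0) + (- sg a * t * c a k0)\<^sup>2"
      using pos_sq_step by metis
    also have "(- sg a * t * c a k0)\<^sup>2 = (sg a)\<^sup>2 * t\<^sup>2 * (c a k0)\<^sup>2" by (simp add: power_mult_distrib)
    finally show ?thesis unfolding ahat_def sg2 by (simp add: algebra_simps)
  qed
  have L: "(\<Sum>a\<in>A. (pos (s a - sg a * (\<Sum>k\<in>F. (m(k0 := m k0 + t)) k * c a k)))\<^sup>2) \<le>
      (\<Sum>a\<in>A. (pos (s a - sg a * ?z a))\<^sup>2) - t * Cabs A sg c (ahat F s sg c m) k0 + t\<^sup>2 * (\<Sum>a\<in>A. (c a k0)\<^sup>2)"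
    using sum_mono[OF loss] unfolding Cabs_def
    by (simp add: sum.distrib sum_subtractf sum_distrib_left)
  have R1: "(\<Sum>k\<in>F. (m(k0 := m k0 + t)) k) = (\<Sum>k\<in>F. m k) + t"
    using upd_sum[OF assms(2,3), of "\<lambda>k y. y" m "m k0 + t"] by simp
  have R2: "(\<Sum>k\<in>F. ((m(k0 := m k0 + t)) k)\<^sup>2) = (\<Sum>k\<in>F. (m k)\<^sup>2) + 2 * t * m k0 + t\<^sup>2"
    using upd_sum[OF assms(2,3), of "\<lambda>k y. y\<^sup>2" m "m k0 + t"] by (simp add: power2_eq_square algebra_simps)
  show ?thesis using L unfolding Pabs_def R1 R2 by (simp add: algebra_simps)
qed

lemma KKT:
  assumes "finite A" "finite F" "k0 \<in> F" "\<forall>a\<in>A. sg a = 1 \<or> sg a = -1"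
    and "lam > 0" "\<eta> > 0"
    and mfeas: "\<forall>k\<in>F. m k \<ge> 0"
    and mopt: "\<And>m'. \<forall>k\<in>F. m' k \<ge> 0 \<Longrightarrow> Pabs A F s sg c lam \<eta> m \<le> Pabs A F s sg c lam \<eta> m'"
  shows "m k0 = pos (Cabs A sg c (ahat F s sg c m) k0 - lam) / (lam * \<eta>)"
proof -
  define G where "G = Cabs A sg c (ahat F s sg c m) k0 - lam - lam * \<eta> * m k0"
  define M where "M = (\<Sum>a\<in>A. (c a k0)\<^sup>2) + lam * \<eta> / 2"
  have M0: "M > 0" unfolding M_def using assms(5,6) by (simp add: sum_nonneg add_nonneg_pos)
  have step: "Pabs A F s sg c lam \<eta> (m(k0 := m k0 + t)) \<le> Pabs A F s sg c lam \<eta> m - t * G + t\<^sup>2 * M" for t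
    using Pabs_step[OF assms(1-4)] unfolding G_def M_def by blast
  have feas: "\<forall>k\<in>F. (m(k0 := m k0 + t)) k \<ge> 0" if "m k0 + t \<ge> 0" for t
    using mfeas that by auto
  have G1: "G \<le> 0"
  proof (rule ccontr)
    assume "\<not> G \<le> 0"
    define t where "t = G / (2 * M)"
    have t0: "t \<ge> 0" using \<open>\<not> G \<le> 0\<close> M0 unfolding t_def by simp
    have "- t * G + t\<^sup>2 * M = - G\<^sup>2 / (4 * M)" unfolding t_def using M0
      by (simp add: field_simps power2_eq_square)
    also have "\<dots> < 0" using \<open>\<not> G \<le> 0\<close> M0 by simp
    finally have "Pabs A F s sg c lam \<eta> (m(k0 := m k0 + t)) < Pabs A F s sg c lam \<eta> m"
      using step[of t] by linarith
    moreover have "m k0 + t \<ge> 0" using t0 mfeas assms(3) by auto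
    ultimately show False using mopt[OF feas] by fastforce
  qed
  have G2: "G \<ge> 0" if mp: "m k0 > 0"
  proof (rule ccontr)
    assume "\<not> G \<ge> 0"
    define h where "h = min (m k0) (- G / (2 * M))"
    have "- G / (2 * M) > 0" using \<open>\<not> G \<ge> 0\<close> M0 by (intro divide_pos_pos) auto
    then have h0: "h > 0" using mp unfolding h_def by simp
    have hle: "h * M \<le> - G / 2" using M0
      by (metis h_def min.cobounded2 mult.commute pos_le_divide_eq mult.assoc divide_divide_eq_left' times_divide_eq_right)
    have "- (- h) * G + (- h)\<^sup>2 * M = h * (G + h * M)" by (simp add: power2_eq_square algebra_simps)
    also have "\<dots> < 0" using h0 hle \<open>\<not> G \<ge> 0\<close> by (intro mult_pos_neg) auto
    finally have "Pabs A F s sg c lam \<eta> (m(k0 := m k0 + - h)) < Pabs A F s sg c lam \<eta> m"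
      using step[of "- h"] by linarith
    moreover have "m k0 + - h \<ge> 0" unfolding h_def by simp
    ultimately show False using mopt[OF feas] by fastforce
  qed
  show ?thesis
  proof (cases "m k0 > 0")
    case True
    then have "G = 0" using G1 G2 by auto
    then have "Cabs A sg c (ahat F s sg c m) k0 - lam = lam * \<eta> * m k0" unfolding G_def by simp
    moreover have "lam * \<eta> * m k0 > 0" using True assms(5,6) by simp
    ultimately show ?thesis using assms(5,6) by (simp add: pos_def)
  next
    case False
    then have "m k0 = 0" using mfeas assms(3) by force
    then show ?thesis using G1 unfolding G_def by (simp add: pos_def)
  qed
qed

lemma lossgap_hat: "lossgap u (2 * pos u) = 0"
  unfolding lossgap_def pos_def by (cases "u \<ge> 0") (auto simp: power2_eq_square)

lemma featgap_hat:
  assumes "lam > 0" "\<eta> > 0"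
  shows "featgap lam \<eta> (pos (C - lam) / (lam * \<eta>)) C = 0"
  using assms unfolding featgap_def pos_def
  by (cases "C - lam \<ge> 0") (auto simp: field_simps power2_eq_square)

lemma abstract_main:
  assumes "finite A" "finite F" "\<forall>a\<in>A. sg a = 1 \<or> sg a = -1"
    and "lam > 0" "\<eta> > 0"
    and mfeas: "\<forall>k\<in>F. m k \<ge> 0"
    and mopt: "\<And>m'. \<forall>k\<in>F. m' k \<ge> 0 \<Longrightarrow> Pabs A F s sg c lam \<eta> m \<le> Pabs A F s sg c lam \<eta> m'"
    and afeas: "\<forall>a\<in>A. al a \<ge> 0"
    and aopt: "\<And>\<beta>. \<forall>a\<in>A. \<beta> a \<ge> 0 \<Longrightarrow> Dabs A F s sg c lam \<eta> \<beta> \<le> Dabs A F s sg c lam \<eta> al"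
    and "k0 \<in> F"
  shows "m k0 = pos (Cabs A sg c al k0 - lam) / (lam * \<eta>)"
proof -
  let ?ah = "ahat F s sg c m"
  have kkt: "\<forall>k\<in>F. m k = pos (Cabs A sg c ?ah k - lam) / (lam * \<eta>)"
  proof
    fix k assume "k \<in> F"
    show "m k = pos (Cabs A sg c ?ah k - lam) / (lam * \<eta>)"
      by (rule KKT[OF assms(1,2) \<open>k \<in> F\<close> assms(3-5) mfeas mopt])
  qed
  have "Pabs A F s sg c lam \<eta> m - Dabs A F s sg c lam \<eta> ?ah = 0"
    unfolding gap_identity
  proof -
    have "(\<Sum>a\<in>A. lossgap (s a - sg a * (\<Sum>k\<in>F. m k * c a k)) (?ah a)) = 0"
      unfolding ahat_def lossgap_hat by simp
    moreover have "(\<Sum>k\<in>F. featgap lam \<eta> (m k) (Cabs A sg c ?ah k)) = 0"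
    proof (intro sum.neutral ballI)
      fix k assume "k \<in> F"
      then have "m k = pos (Cabs A sg c ?ah k - lam) / (lam * \<eta>)" using kkt by blast
      then show "featgap lam \<eta> (m k) (Cabs A sg c ?ah k) = 0" using featgap_hat[OF assms(4,5)] by simp
    qed
    ultimately show "(\<Sum>a\<in>A. lossgap (s a - sg a * (\<Sum>k\<in>F. m k * c a k)) (?ah a)) +
      (\<Sum>k\<in>F. featgap lam \<eta> (m k) (Cabs A sg c ?ah k)) = 0" by simp
  qed
  moreover have "Dabs A F s sg c lam \<eta> ?ah \<le> Dabs A F s sg c lam \<eta> al"
    by (rule aopt) (auto simp: ahat_def pos_def)
  ultimately have le: "Pabs A F s sg c lam \<eta> m - Dabs A F s sg c lam \<eta> al \<le> 0" by linarith
  have n1: "(\<Sum>a\<in>A. lossgap (s a - sg a * (\<Sum>k\<in>F. m k * c a k)) (al a)) \<ge> 0"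
    using afeas lossgap_nonneg by (simp add: sum_nonneg)
  have n2: "\<forall>k\<in>F. featgap lam \<eta> (m k) (Cabs A sg c al k) \<ge> 0"
    using mfeas featgap_nonneg[OF assms(4,5)] by simp
  have "(\<Sum>k\<in>F. featgap lam \<eta> (m k) (Cabs A sg c al k)) \<le> 0"
    using le n1 unfolding gap_identity by linarith
  then have "(\<Sum>k\<in>F. featgap lam \<eta> (m k) (Cabs A sg c al k)) = 0"
    using n2 by (meson antisym sum_nonneg)
  then have "featgap lam \<eta> (m k0) (Cabs A sg c al k0) = 0"
    using sum_nonneg_eq_0_iff[OF assms(2), of "\<lambda>k. featgap lam \<eta> (m k) (Cabs A sg c al k)"] n2 \<open>k0 \<in> F\<close> by simp
  then show ?thesis using featgap_zero[OF assms(4,5)] mfeas \<open>k0 \<in> F\<close> by simp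
qed


lemma pairidx_split:
  "pairidx n Dc Sc = (\<lambda>(i,l). (True,i,l)) ` Sigma {1..n} Dc \<union> (\<lambda>(i,j). (False,i,j)) ` Sigma {1..n} Sc"
  unfolding pairidx_def by auto

lemma sum_pairidx:
  fixes f :: "bool \<times> nat \<times> nat \<Rightarrow> real"
  assumes fin: "\<forall>i\<in>{1..n}. finite (Dc i) \<and> finite (Sc i)"
  shows "(\<Sum>a\<in>pairidx n Dc Sc. f a) = (\<Sum>i\<in>{1..n}. (\<Sum>l\<in>Dc i. f (True,i,l)) + (\<Sum>j\<in>Sc i. f (False,i,j)))"
    and "finite (pairidx n Dc Sc)"
proof -
  have f1: "finite (Sigma {1..n} Dc)" "finite (Sigma {1..n} Sc)" using fin by auto
  have i1: "inj_on (\<lambda>(i,l). (True::bool,i::nat,l::nat)) X" for X by (auto simp: inj_on_def)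
  have i2: "inj_on (\<lambda>(i,l). (False::bool,i::nat,l::nat)) X" for X by (auto simp: inj_on_def)
  show "finite (pairidx n Dc Sc)" unfolding pairidx_split using f1 by auto
  have "(\<Sum>a\<in>pairidx n Dc Sc. f a) = (\<Sum>a\<in>(\<lambda>(i,l). (True,i,l)) ` Sigma {1..n} Dc. f a) + (\<Sum>a\<in>(\<lambda>(i,j). (False,i,j)) ` Sigma {1..n} Sc. f a)"
    unfolding pairidx_split using f1 by (intro sum.union_disjoint) auto
  also have "(\<Sum>a\<in>(\<lambda>(i,l). (True,i,l)) ` Sigma {1..n} Dc. f a) = (\<Sum>(i,l)\<in>Sigma {1..n} Dc. f (True,i,l))"
    using i1 by (simp add: sum.reindex case_prod_beta')
  also have "\<dots> = (\<Sum>i\<in>{1..n}. \<Sum>l\<in>Dc i. f (True,i,l))" using fin by (simp add: sum.Sigma)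
  also have "(\<Sum>a\<in>(\<lambda>(i,j). (False,i,j)) ` Sigma {1..n} Sc. f a) = (\<Sum>(i,j)\<in>Sigma {1..n} Sc. f (False,i,j))"
    using i2 by (simp add: sum.reindex case_prod_beta')
  also have "\<dots> = (\<Sum>i\<in>{1..n}. \<Sum>j\<in>Sc i. f (False,i,j))" using fin by (simp add: sum.Sigma)
  finally show "(\<Sum>a\<in>pairidx n Dc Sc. f a) = (\<Sum>i\<in>{1..n}. (\<Sum>l\<in>Dc i. f (True,i,l)) + (\<Sum>j\<in>Sc i. f (False,i,j)))"
    by (simp add: sum.distrib)
qed

definition sgc :: "bool \<times> nat \<times> nat \<Rightarrow> real" where "sgc a = (if fst a then 1 else -1)"
definition ccc :: "(nat \<Rightarrow> nat \<Rightarrow> real) \<Rightarrow> bool \<times> nat \<times> nat \<Rightarrow> nat \<Rightarrow> real" where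
  "ccc x a k = cvec x (fst (snd a)) (snd (snd a)) k"

lemma primal_eq:
  assumes fin: "\<forall>i\<in>{1..n}. finite (Dc i) \<and> finite (Sc i)"
  shows "primal n p x Dc Sc L U \<eta> lam m = Pabs (pairidx n Dc Sc) {1..p} (tvec L U) sgc (ccc x) lam \<eta> m"
  unfolding primal_def Pabs_def sum_pairidx(1)[OF fin]
  by (simp add: sqhinge_def pos_def tvec_def sgc_def ccc_def mdot_def)

lemma Calpha_eq:
  assumes fin: "\<forall>i\<in>{1..n}. finite (Dc i) \<and> finite (Sc i)"
  shows "Calpha n x Dc Sc al k = Cabs (pairidx n Dc Sc) sgc (ccc x) al k"
  unfolding Calpha_def Cabs_def sum_pairidx(1)[OF fin]
  by (simp add: sgc_def ccc_def sum_negf)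

lemma dual_eq:
  assumes fin: "\<forall>i\<in>{1..n}. finite (Dc i) \<and> finite (Sc i)" and "lam > 0" "\<eta> > 0"
  shows "dual n p x Dc Sc L U \<eta> lam al = Dabs (pairidx n Dc Sc) {1..p} (tvec L U) sgc (ccc x) lam \<eta> al"
proof -
  have "lam * \<eta> / 2 * (\<Sum>k\<in>{1..p}. (1 / (lam * \<eta>) * max (Calpha n x Dc Sc al k - lam) 0)\<^sup>2)
     = (\<Sum>k\<in>{1..p}. (pos (Cabs (pairidx n Dc Sc) sgc (ccc x) al k - lam))\<^sup>2 / (2 * lam * \<eta>))"
    unfolding sum_distrib_left Calpha_eq[OF fin] pos_def using assms(2,3)
    by (intro sum.cong refl) (simp add: field_simps power2_eq_square)
  then show ?thesis unfolding dual_def Dabs_def by (simp add: mult.commute)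
qed

theorem theorem5:
  fixes n K p :: nat
    and x :: "nat \<Rightarrow> nat \<Rightarrow> real"
    and Dc Sc :: "nat \<Rightarrow> nat set"
    and L U \<eta> lam r :: real
    and g :: "nat \<Rightarrow> real"
    and cnt :: "nat \<Rightarrow> nat \<Rightarrow> nat"
    and desc :: "nat \<Rightarrow> nat \<Rightarrow> bool"
    and \<alpha>opt q :: "bool \<times> nat \<times> nat \<Rightarrow> real"
    and mopt :: "nat \<Rightarrow> real"
    and k :: nat
  assumes "n \<ge> 1" and "K \<ge> 1" and "p \<ge> 1"
    and D_sub: "\<And>i. i \<in> {1..n} \<Longrightarrow> Dc i \<subseteq> {1..n} \<and> card (Dc i) = K"
    and S_sub: "\<And>i. i \<in> {1..n} \<Longrightarrow> Sc i \<subseteq> {1..n} \<and> card (Sc i) = K"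
    and g_nonneg: "\<And>z. g z \<ge> 0" and g_mono: "mono g"
    and x_def: "\<And>i k. i \<in> {1..n} \<Longrightarrow> k \<in> {1..p} \<Longrightarrow> x i k = g (cnt i k)"
    and desc_in: "\<And>k k'. desc k k' \<Longrightarrow> k \<in> {1..p} \<and> k' \<in> {1..p}"
    and desc_cnt: "\<And>i k k'. i \<in> {1..n} \<Longrightarrow> desc k k' \<Longrightarrow> cnt i k' \<le> cnt i k"
    and "L \<ge> U" and "U \<ge> 0" and "\<eta> > 0" and "lam > 0"
    and alpha_feas: "\<forall>a\<in>pairidx n Dc Sc. \<alpha>opt a \<ge> 0"
    and alpha_opt: "\<And>\<beta>. \<forall>a\<in>pairidx n Dc Sc. \<beta> a \<ge> 0 \<Longrightarrow>
                      dual n p x Dc Sc L U \<eta> lam \<beta> \<le> dual n p x Dc Sc L U \<eta> lam \<alpha>opt"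
    and m_feas: "\<forall>k\<in>{1..p}. mopt k \<ge> 0"
    and m_opt: "\<And>m. \<forall>k\<in>{1..p}. m k \<ge> 0 \<Longrightarrow>
                      primal n p x Dc Sc L U \<eta> lam mopt \<le> primal n p x Dc Sc L U \<eta> lam m"
    and q_nonneg: "\<forall>a\<in>pairidx n Dc Sc. q a \<ge> 0"
    and "r \<ge> 0"
    and ball: "(\<Sum>a\<in>pairidx n Dc Sc. (\<alpha>opt a - q a)\<^sup>2) \<le> r\<^sup>2"
    and "k \<in> {1..p}"
    and prune_le: "prune n x Dc Sc q r k \<le> lam"
  shows "\<forall>k'. (k' = k \<or> desc k k') \<longrightarrow> mopt k' = 0"
proof (intro allI impI)
  fix k' assume kk: "k' = k \<or> desc k k'"
  have fin: "\<forall>i\<in>{1..n}. finite (Dc i) \<and> finite (Sc i)"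
    using D_sub S_sub by (meson finite_atLeastAtMost finite_subset)
  let ?A = "pairidx n Dc Sc"
  have finA: "finite ?A" by (rule sum_pairidx(2)[OF fin])
  have sgpm: "\<forall>a\<in>?A. sgc a = 1 \<or> sgc a = -1" by (simp add: sgc_def)
  have k'p: "k' \<in> {1..p}" using kk desc_in \<open>k \<in> {1..p}\<close> by blast
  have mk': "mopt k' = pos (Cabs ?A sgc (ccc x) \<alpha>opt k' - lam) / (lam * \<eta>)"
  proof (rule abstract_main[OF finA finite_atLeastAtMost sgpm \<open>lam > 0\<close> \<open>\<eta> > 0\<close> m_feas _ alpha_feas _ k'p])
    fix m' :: "nat \<Rightarrow> real" assume "\<forall>k\<in>{1..p}. m' k \<ge> 0"
    then show "Pabs ?A {1..p} (tvec L U) sgc (ccc x) lam \<eta> mopt \<le> Pabs ?A {1..p} (tvec L U) sgc (ccc x) lam \<eta> m'"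
      using m_opt unfolding primal_eq[OF fin] by blast
  next
    fix \<beta> :: "bool \<times> nat \<times> nat \<Rightarrow> real" assume "\<forall>a\<in>?A. \<beta> a \<ge> 0"
    then show "Dabs ?A {1..p} (tvec L U) sgc (ccc x) lam \<eta> \<beta> \<le> Dabs ?A {1..p} (tvec L U) sgc (ccc x) lam \<eta> \<alpha>opt"
      using alpha_opt unfolding dual_eq[OF fin \<open>lam > 0\<close> \<open>\<eta> > 0\<close>] by blast
  qed
  have idx: "fst (snd a) \<in> {1..n} \<and> snd (snd a) \<in> {1..n}" if "a \<in> ?A" for a
    using that unfolding pairidx_def
  proof (elim UnE CollectE exE conjE)
    fix i l assume "a = (True, i, l)" "i \<in> {1..n}" "l \<in> Dc i"
    then show ?thesis using D_sub[of i] by auto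
  next
    fix i l assume "a = (False, i, l)" "i \<in> {1..n}" "l \<in> Sc i"
    then show ?thesis using S_sub[of i] by auto
  qed
  have xnn: "x i kk \<ge> 0" if "i \<in> {1..n}" "kk \<in> {1..p}" for i kk
    using x_def[OF that] g_nonneg by simp
  have xmono: "x i k' \<le> x i k" if "i \<in> {1..n}" for i
  proof (cases "k' = k")
    case False
    then have "desc k k'" using kk by simp
    then show ?thesis using x_def[OF that] desc_in desc_cnt[OF that] g_mono
      by (metis monoD)
  qed simp
  define Mx where "Mx (a :: bool \<times> nat \<times> nat) = (max (x (fst (snd a)) k) (x (snd (snd a)) k))\<^sup>2" for a
  have cM: "0 \<le> ccc x a k' \<and> ccc x a k' \<le> Mx a" if "a \<in> ?A" for a
  proof -
    obtain i j where ij: "i = fst (snd a)" "j = snd (snd a)" by simp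
    have ij1: "i \<in> {1..n}" "j \<in> {1..n}" using idx[OF that] ij by auto
    have "\<bar>x i k' - x j k'\<bar> \<le> max (x i k) (x j k)"
      using xnn[OF ij1(1) k'p] xnn[OF ij1(2) k'p] xmono[OF ij1(1)] xmono[OF ij1(2)] by auto
    then have "\<bar>x i k' - x j k'\<bar>\<^sup>2 \<le> (max (x i k) (x j k))\<^sup>2" by (intro power_mono) auto
    then show ?thesis unfolding ccc_def cvec_def Mx_def ij[symmetric] by (simp add: power2_eq_square)
  qed
  define e where "e (a :: bool \<times> nat \<times> nat) = (if fst a then ccc x a k' else 0)" for a
  have C1: "Cabs ?A sgc (ccc x) \<alpha>opt k' \<le> (\<Sum>a\<in>?A. \<alpha>opt a * e a)"
    unfolding Cabs_def
  proof (rule sum_mono)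
    fix a assume "a \<in> ?A"
    then show "sgc a * \<alpha>opt a * ccc x a k' \<le> \<alpha>opt a * e a"
      using cM alpha_feas unfolding sgc_def e_def by (auto simp: mult_nonneg_nonneg)
  qed
  have split: "(\<Sum>a\<in>?A. \<alpha>opt a * e a) = (\<Sum>a\<in>?A. q a * e a) + (\<Sum>a\<in>?A. (\<alpha>opt a - q a) * e a)"
    by (simp add: sum.distrib[symmetric] algebra_simps)
  have CS: "(\<Sum>a\<in>?A. (\<alpha>opt a - q a) * e a) \<le> r * sqrt (\<Sum>a\<in>?A. (Mx a)\<^sup>2)"
  proof -
    have "(\<Sum>a\<in>?A. (\<alpha>opt a - q a) * e a) \<le> sqrt ((\<Sum>a\<in>?A. (\<alpha>opt a - q a)\<^sup>2) * (\<Sum>a\<in>?A. (e a)\<^sup>2))"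
      using Cauchy_Schwarz_ineq_sum[of "\<lambda>a. \<alpha>opt a - q a" e ?A] real_le_rsqrt by blast
    also have "\<dots> = sqrt (\<Sum>a\<in>?A. (\<alpha>opt a - q a)\<^sup>2) * sqrt (\<Sum>a\<in>?A. (e a)\<^sup>2)" by (simp add: real_sqrt_mult)
    also have "\<dots> \<le> r * sqrt (\<Sum>a\<in>?A. (Mx a)\<^sup>2)"
    proof (rule mult_mono)
      show "sqrt (\<Sum>a\<in>?A. (\<alpha>opt a - q a)\<^sup>2) \<le> r"
        using ball \<open>r \<ge> 0\<close> real_sqrt_le_mono[OF ball] by simp
      have "(\<Sum>a\<in>?A. (e a)\<^sup>2) \<le> (\<Sum>a\<in>?A. (Mx a)\<^sup>2)"
      proof (rule sum_mono)
        fix a assume "a \<in> ?A"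
        then show "(e a)\<^sup>2 \<le> (Mx a)\<^sup>2" using cM[of a] unfolding e_def by (auto intro: power_mono)
      qed
      then show "sqrt (\<Sum>a\<in>?A. (e a)\<^sup>2) \<le> sqrt (\<Sum>a\<in>?A. (Mx a)\<^sup>2)" by simp
    qed (use \<open>r \<ge> 0\<close> in \<open>auto simp: sum_nonneg\<close>)
    finally show ?thesis .
  qed
  have Q: "(\<Sum>a\<in>?A. q a * e a) \<le> (\<Sum>a\<in>?A. if fst a then q a * Mx a else 0)"
  proof (rule sum_mono)
    fix a assume "a \<in> ?A"
    then show "q a * e a \<le> (if fst a then q a * Mx a else 0)"
      using cM[of a] q_nonneg unfolding e_def by (auto intro: mult_left_mono)
  qed
  have P1: "(\<Sum>a\<in>?A. if fst a then q a * Mx a else 0) = (\<Sum>i\<in>{1..n}. \<Sum>l\<in>Dc i. q (True, i, l) * (max (x i k) (x l k))\<^sup>2)"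
    unfolding sum_pairidx(1)[OF fin] Mx_def by simp
  have P2: "(\<Sum>a\<in>?A. (Mx a)\<^sup>2) = (\<Sum>i\<in>{1..n}. (\<Sum>l\<in>Dc i. (max (x i k) (x l k)) ^ 4) + (\<Sum>j\<in>Sc i. (max (x i k) (x j k)) ^ 4))"
    unfolding sum_pairidx(1)[OF fin] Mx_def by (simp flip: power_mult)
  have "Cabs ?A sgc (ccc x) \<alpha>opt k' \<le> prune n x Dc Sc q r k"
    using C1 split CS Q unfolding prune_def P1[symmetric] P2[symmetric] by linarith
  then have "Cabs ?A sgc (ccc x) \<alpha>opt k' - lam \<le> 0" using prune_le by linarith
  then show "mopt k' = 0" unfolding mk' pos_def by simp
qed
end
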